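(* Let $f:[a,b]\to\mathbb{C}$ be continuous and write $f=g+ih$ with $g,h:[a,b]\to\mathbb{R}$ its real and imaginary parts. If $h$ is Lipschitz on $[a,b]$, then $$\dim_H(G(g+ih))=\dim_H(G(g+h))=\dim_H(G((g,h)))=\dim_H(G(g)),$$ $$\overline{\dim}_B(G(g+ih))=\overline{\dim}_B(G(g+h))=\overline{\dim}_B(G((g,h)))=\overline{\dim}_B(G(g)),$$ $$\dim_P(G(g+ih))=\dim_P(G(g+h))=\dim_P(G((g,h)))=\dim_P(G(g)).$$
   Context: For a function $u$ on $[a,b]$, $G(u)=\{(x,u(x)):x\in[a,b]\}$ denotes its graph. The graph of the complex-valued $g+ih$ is a subset of $\mathbb{R}\times\mathbb{C}\cong\mathbb{R}^3$, the graph of the vector-valued $(g,h):[a,b]\to\mathbb{R}^2$ is a subset of $\mathbb{R}^3$, and graphs of real-valued functions $g$, $g+h$ are subsets of $\mathbb{R}^2$, all with Euclidean metrics. $\dim_H$, $\overline{\dim}_B$, $\dim_P$ denote Hausdorff, upper box and packing dimension. *)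

theory Defs
  imports "HOL-Analysis.Analysis"
begin

definition graph_on :: "real set \<Rightarrow> (real \<Rightarrow> 'b) \<Rightarrow> (real \<times> 'b) set" where
  "graph_on I u = {(x, u x) | x. x \<in> I}"

text \<open>delta-approximation of the s-dimensional Hausdorff measure: infimum over countable
  covers (sequences, finite covers padded with empty sets) by bounded sets of diameter at most delta.\<close>
definition hausdorff_approx :: "real \<Rightarrow> real \<Rightarrow> 'a::metric_space set \<Rightarrow> ennreal" where
  "hausdorff_approx s \<delta> E =
     (INF U \<in> {U :: nat \<Rightarrow> 'a set. E \<subseteq> (\<Union>i. U i) \<and> (\<forall>i. bounded (U i) \<and> diameter (U i) \<le> \<delta>)}.
        (\<Sum>i. ennreal (diameter (U i) powr s)))"

definition hausdorff_measure :: "real \<Rightarrow> 'a::metric_space set \<Rightarrow> ennreal" where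
  "hausdorff_measure s E = (SUP \<delta> \<in> {0<..}. hausdorff_approx s \<delta> E)"

definition hausdorff_dim :: "'a::metric_space set \<Rightarrow> ereal" where
  "hausdorff_dim E = Inf {ereal s | s. 0 \<le> s \<and> hausdorff_measure s E = 0}"

definition covering_number :: "real \<Rightarrow> 'a::metric_space set \<Rightarrow> enat" where
  "covering_number \<delta> E = Inf {enat n | n. \<exists>U :: nat \<Rightarrow> 'a set.
      E \<subseteq> (\<Union>i<n. U i) \<and> (\<forall>i<n. bounded (U i) \<and> diameter (U i) \<le> \<delta>)}"

definition upper_box_dim :: "'a::metric_space set \<Rightarrow> ereal" where
  "upper_box_dim E = Limsup (at_right 0)
     (\<lambda>\<delta>. if covering_number \<delta> E = \<infinity> then \<infinity>
           else ereal (ln (real (the_enat (covering_number \<delta> E))) / - ln \<delta>))"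

text \<open>P^s_delta(E): supremum of sum (diam B_i)^s = (2 r_i)^s over (finite) collections of
  pairwise disjoint closed balls with centres in E and radii 0 < r_i \<le> delta.\<close>
definition packing_approx :: "real \<Rightarrow> real \<Rightarrow> 'a::metric_space set \<Rightarrow> ennreal" where
  "packing_approx s \<delta> E =
     (SUP B \<in> {B :: ('a \<times> real) set. finite B \<and> (\<forall>(x, r) \<in> B. x \<in> E \<and> 0 < r \<and> r \<le> \<delta>) \<and>
               disjoint_family_on (\<lambda>(x, r). cball x r) B}.
        (\<Sum>(x, r) \<in> B. ennreal ((2 * r) powr s)))"

definition packing_premeasure :: "real \<Rightarrow> 'a::metric_space set \<Rightarrow> ennreal" where
  "packing_premeasure s E = (INF \<delta> \<in> {0<..}. packing_approx s \<delta> E)"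

definition packing_measure :: "real \<Rightarrow> 'a::metric_space set \<Rightarrow> ennreal" where
  "packing_measure s E =
     (INF F \<in> {F :: nat \<Rightarrow> 'a set. E \<subseteq> (\<Union>i. F i)}. (\<Sum>i. packing_premeasure s (F i)))"

definition packing_dim :: "'a::metric_space set \<Rightarrow> ereal" where
  "packing_dim E = Inf {ereal s | s. 0 \<le> s \<and> packing_measure s E = 0}"

end

theory Submission
  imports Defs
begin
lemma lip_image_diam:
  fixes F :: "'a::metric_space \<Rightarrow> 'b::metric_space"
  assumes lip: "K-lipschitz_on S F" and bS: "bounded S"
  shows "bounded (F ` S) \<and> diameter (F ` S) \<le> K * diameter S"
proof (cases "S = {}")
  case True then show ?thesis by simp
next
  case False
  then obtain x0 where x0: "x0 \<in> S" by auto
  have K0: "0 \<le> K" using lipschitz_on_nonneg[OF lip] .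
  have d: "dist (F x) (F y) \<le> K * diameter S" if "x \<in> S" "y \<in> S" for x y
  proof -
    have "dist (F x) (F y) \<le> K * dist x y" using lipschitz_onD[OF lip that] .
    also have "\<dots> \<le> K * diameter S"
      using diameter_bounded_bound[OF bS that] K0 by (simp add: mult_left_mono)
    finally show ?thesis .
  qed
  have "bounded (F ` S)"
    unfolding bounded_def using d x0 by blast
  moreover have "diameter (F ` S) \<le> K * diameter S"
  proof -
    have "diameter (F ` S) = (SUP (x,y)\<in>(F ` S)\<times>(F ` S). dist x y)"
      unfolding diameter_def using False by simp
    also have "\<dots> \<le> K * diameter S"
      using False d by (intro cSUP_least) auto
    finally show ?thesis .
  qed
  ultimately show ?thesis by blast
qed

lemma hausdorff_zero_image:
  fixes F :: "'a::metric_space \<Rightarrow> 'b::metric_space"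
  assumes lip: "K-lipschitz_on E F" and K: "K > 0" and s: "0 \<le> s"
    and H: "hausdorff_measure s E = 0"
  shows "hausdorff_measure s (F ` E) = 0"
proof -
  have "hausdorff_approx s \<delta> (F ` E) = 0" if \<delta>: "\<delta> > 0" for \<delta>
  proof -
    have "hausdorff_approx s (\<delta>/K) E \<le> hausdorff_measure s E"
      unfolding hausdorff_measure_def using \<delta> K by (intro SUP_upper) auto
    then have A0: "hausdorff_approx s (\<delta>/K) E = 0" using H by simp
    have epsH: "hausdorff_approx s \<delta> (F ` E) \<le> 0 + ennreal e" if e: "e > 0" for e
    proof -
      have Kp: "K powr s > 0" using K by simp
      have "hausdorff_approx s (\<delta>/K) E < ennreal (e / K powr s)"
        using A0 e Kp by simp
      then obtain U where U: "E \<subseteq> (\<Union>i. U i)" "\<forall>i. bounded (U i) \<and> diameter (U i) \<le> \<delta>/K"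
        and sU: "(\<Sum>i. ennreal (diameter (U i) powr s)) < ennreal (e / K powr s)"
        unfolding hausdorff_approx_def by (auto simp: INF_less_iff)
      define V where "V i = F ` (U i \<inter> E)" for i
      have Vb: "bounded (V i) \<and> diameter (V i) \<le> K * diameter (U i)" for i
      proof -
        have l: "K-lipschitz_on (U i \<inter> E) F" using lipschitz_on_subset[OF lip] by blast
        have b: "bounded (U i \<inter> E)" using U by (meson bounded_subset inf_le1)
        have "diameter (U i \<inter> E) \<le> diameter (U i)" using U by (intro diameter_subset) auto
        then show ?thesis using lip_image_diam[OF l b] K unfolding V_def
          by (meson mult_left_mono less_imp_le order_trans)
      qed
      have V: "bounded (V i) \<and> diameter (V i) \<le> \<delta>" for i
      proof -
        have "K * diameter (U i) \<le> K * (\<delta>/K)" using U K by (intro mult_left_mono) auto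
        then show ?thesis using Vb[of i] K by simp
      qed
      have Vd: "diameter (V i) powr s \<le> K powr s * diameter (U i) powr s" for i
      proof -
        have "diameter (V i) powr s \<le> (K * diameter (U i)) powr s"
          using Vb[of i] s diameter_ge_0[of "V i"] by (intro powr_mono2) auto
        also have "\<dots> = K powr s * diameter (U i) powr s"
          using K diameter_ge_0[of "U i"] U by (meson powr_mult less_imp_le)
        finally show ?thesis .
      qed
      have cov: "F ` E \<subseteq> (\<Union>i. V i)" using U unfolding V_def by blast
      have "hausdorff_approx s \<delta> (F ` E) \<le> (\<Sum>i. ennreal (diameter (V i) powr s))"
        unfolding hausdorff_approx_def using cov V by (intro INF_lower) auto
      also have "\<dots> \<le> (\<Sum>i. ennreal (K powr s) * ennreal (diameter (U i) powr s))"
        using Vd by (intro suminf_le) (auto simp flip: ennreal_mult intro: ennreal_leI)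
      also have "\<dots> = ennreal (K powr s) * (\<Sum>i. ennreal (diameter (U i) powr s))"
        by simp
      also have "\<dots> \<le> ennreal (K powr s) * ennreal (e / K powr s)"
        using sU by (intro mult_left_mono) auto
      also have "\<dots> = ennreal e"
        using Kp e by (subst ennreal_mult[symmetric]) auto
      finally show ?thesis by simp
    qed
    have "hausdorff_approx s \<delta> (F ` E) \<le> 0" by (rule ennreal_le_epsilon) (rule epsH)
    then show ?thesis by simp
  qed
  then show ?thesis unfolding hausdorff_measure_def by simp
qed


lemma lip_pos:
  assumes "K-lipschitz_on E F"
  obtains K' where "K'-lipschitz_on E F" "K' > 0" "K' \<ge> 1"
proof -
  have "0 \<le> K" using lipschitz_on_nonneg[OF assms] .
  then have "(K+1)-lipschitz_on E F" using lipschitz_on_le[OF assms] by simp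
  then show ?thesis using that \<open>0 \<le> K\<close> by simp
qed

lemma hdim_image_le:
  fixes F :: "'a::metric_space \<Rightarrow> 'b::metric_space"
  assumes lip: "K-lipschitz_on E F"
  shows "hausdorff_dim (F ` E) \<le> hausdorff_dim E"
proof -
  obtain K' where l: "K'-lipschitz_on E F" "K' > 0" using lip_pos[OF lip] by blast
  show ?thesis unfolding hausdorff_dim_def
    by (rule Inf_superset_mono) (auto intro: hausdorff_zero_image[OF l])
qed


lemma cball_disj_dist:
  fixes y y' :: "'a::real_normed_vector"
  assumes "cball y r \<inter> cball y' r' = {}" "0 \<le> r" "0 \<le> r'"
  shows "r + r' < dist y y'"
proof (rule ccontr)
  assume "\<not> r + r' < dist y y'"
  then have le: "dist y y' \<le> r + r'" by simp
  show False
  proof (cases "r + r' = 0")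
    case True
    then have "y = y'" using le by simp
    then have "y \<in> cball y r" "y \<in> cball y' r'" using assms by auto
    then show False using assms(1) by blast
  next
    case False
    then have rr: "r + r' > 0" using assms by simp
    define t where "t = r / (r + r')"
    have t01: "0 \<le> t" "t \<le> 1" using assms rr by (auto simp: t_def)
    define z where "z = y + t *\<^sub>R (y' - y)"
    have nd: "norm (y' - y) = dist y y'" by (metis dist_norm dist_commute)
    have "y - z = - (t *\<^sub>R (y' - y))" by (simp add: z_def)
    then have "dist y z = t * dist y y'"
      using t01 nd by (simp add: dist_norm)
    also have "\<dots> \<le> t * (r + r')" using le t01 by (intro mult_left_mono) auto
    also have "\<dots> = r" using rr by (simp add: t_def)
    finally have z1: "z \<in> cball y r" by simp
    have "y' - z = (1 - t) *\<^sub>R (y' - y)" by (simp add: z_def algebra_simps)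
    then have "dist y' z = (1 - t) * dist y y'"
      using t01 nd by (simp add: dist_norm)
    also have "\<dots> \<le> (1 - t) * (r + r')" using le t01 by (intro mult_left_mono) auto
    also have "\<dots> = r'"
    proof -
      have "1 - t = r' / (r + r')" using rr by (simp add: t_def diff_divide_eq_iff)
      then show ?thesis using rr by simp
    qed
    finally have z2: "z \<in> cball y' r'" by simp
    show False using z1 z2 assms by blast
  qed
qed


lemma packing_approx_image:
  fixes F :: "'a::metric_space \<Rightarrow> 'b::real_normed_vector"
  assumes lip: "K-lipschitz_on E F" and K: "K > 0" and s: "0 \<le> s"
  shows "packing_approx s \<delta> (F ` E) \<le> ennreal (K powr s) * packing_approx s (\<delta>/K) E"
  unfolding packing_approx_def
proof (rule SUP_least)
  fix B assume "B \<in> {B. finite B \<and> (\<forall>(x, r)\<in>B. x \<in> F ` E \<and> 0 < r \<and> r \<le> \<delta>) \<and>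
               disjoint_family_on (\<lambda>(x, r). cball x r) B}"
  then have fin: "finite B" and Bc: "\<And>y r. (y,r) \<in> B \<Longrightarrow> y \<in> F ` E \<and> 0 < r \<and> r \<le> \<delta>"
    and dj: "disjoint_family_on (\<lambda>(x, r). cball x r) B" by auto
  define g where "g = (\<lambda>(y::'b,r::real). (inv_into E F y, r/K))"
  have ginj: "inj_on g B"
  proof (rule inj_onI)
    fix p q assume pq: "p \<in> B" "q \<in> B" "g p = g q"
    obtain y r y' r' where pq': "p = (y,r)" "q = (y',r')" by fastforce
    then have e: "inv_into E F y = inv_into E F y'" "r/K = r'/K" using pq by (auto simp: g_def)
    then have "y = y'" using Bc pq pq' f_inv_into_f by metis
    moreover have "r = r'" using e K by simp
    ultimately show "p = q" using pq' by simp
  qed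
  let ?A = "{B. finite B \<and> (\<forall>(x, r)\<in>B. x \<in> E \<and> 0 < r \<and> r \<le> \<delta>/K) \<and>
               disjoint_family_on (\<lambda>(x, r). cball x r) B}"
  have gB: "g ` B \<in> ?A"
  proof -
    have "finite (g ` B)" using fin by simp
    moreover have "\<forall>(x, r)\<in>g ` B. x \<in> E \<and> 0 < r \<and> r \<le> \<delta>/K"
      using Bc K by (auto simp: g_def inv_into_into divide_right_mono)
    moreover have "disjoint_family_on (\<lambda>(x, r). cball x r) (g ` B)"
      unfolding disjoint_family_on_def
    proof (intro ballI impI)
      fix m n assume mn: "m \<in> g ` B" "n \<in> g ` B" "m \<noteq> n"
      then obtain y r y' r' where yr: "(y,r) \<in> B" "(y',r') \<in> B" "m = g (y,r)" "n = g (y',r')"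
        by auto
      with mn have ne: "(y,r) \<noteq> (y',r')" by auto
      have "cball y r \<inter> cball y' r' = {}"
        using dj yr(1,2) ne unfolding disjoint_family_on_def by fastforce
      then have rr: "r + r' < dist y y'" using cball_disj_dist Bc yr by (meson less_imp_le)
      define x where "x = inv_into E F y"
      define x' where "x' = inv_into E F y'"
      have xE: "x \<in> E" "x' \<in> E" using Bc yr by (auto simp: x_def x'_def inv_into_into)
      have "y = F x" "y' = F x'" using Bc yr by (auto simp: x_def x'_def f_inv_into_f)
      then have "dist y y' \<le> K * dist x x'" using lipschitz_onD[OF lip xE] by simp
      then have "r + r' < K * dist x x'" using rr by simp
      then have "r/K + r'/K < dist x x'" using K
        by (simp add: add_divide_distrib[symmetric] divide_less_eq mult.commute)
      then show "(\<lambda>(x, r). cball x r) m \<inter> (\<lambda>(x, r). cball x r) n = {}"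
        using yr by (auto simp: g_def x_def x'_def intro!: disjoint_cballI)
    qed
    ultimately show ?thesis by blast
  qed
  have "(\<Sum>(x, r)\<in>B. ennreal ((2 * r) powr s))
      = (\<Sum>p\<in>B. ennreal (K powr s) * (case g p of (x, r) \<Rightarrow> ennreal ((2 * r) powr s)))"
  proof (rule sum.cong[OF refl])
    fix p assume "p \<in> B"
    then obtain y r where p: "p = (y,r)" "r > 0" using Bc by (cases p) auto
    have "K powr s * (2 * (r/K)) powr s = (K * (2 * (r/K))) powr s"
      using K p powr_mult[of K "2 * (r/K)" s] by (simp only:)
    also have "\<dots> = (2 * r) powr s" using K by simp
    finally show "(case p of (x, r) \<Rightarrow> ennreal ((2 * r) powr s))
        = ennreal (K powr s) * (case g p of (x, r) \<Rightarrow> ennreal ((2 * r) powr s))"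
      using p K by (simp add: g_def ennreal_mult[symmetric])
  qed
  also have "\<dots> = ennreal (K powr s) * (\<Sum>q\<in>g ` B. case q of (x, r) \<Rightarrow> ennreal ((2 * r) powr s))"
    by (simp add: sum_distrib_left sum.reindex[OF ginj])
  also have "\<dots> \<le> ennreal (K powr s) * (SUP B\<in>?A. \<Sum>(x, r)\<in>B. ennreal ((2 * r) powr s))"
    by (intro mult_left_mono SUP_upper gB) auto
  finally show "(\<Sum>(x, r)\<in>B. ennreal ((2 * r) powr s)) \<le> ennreal (K powr s) * (SUP B\<in>?A. \<Sum>(x, r)\<in>B. ennreal ((2 * r) powr s))" .
qed



lemma ennreal_le_mult_INF:
  fixes X :: ennreal
  assumes c: "c > 0" and X: "\<And>x. x \<in> D \<Longrightarrow> X \<le> ennreal c * g x"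
  shows "X \<le> ennreal c * (INF x\<in>D. g x)"
proof (rule ennreal_le_epsilon)
  fix e :: real assume fin: "ennreal c * (INF x\<in>D. g x) < top" and e: "0 < e"
  show "X \<le> ennreal c * (INF x\<in>D. g x) + ennreal e"
  proof (cases "(INF x\<in>D. g x) = 0")
    case True
    then have "(INF x\<in>D. g x) < ennreal (e/c)" using e c by simp
    then obtain x where x: "x \<in> D" "g x < ennreal (e/c)" by (auto simp: INF_less_iff)
    have "X \<le> ennreal c * g x" using X x by simp
    also have "\<dots> \<le> ennreal c * ennreal (e/c)" using x by (intro mult_left_mono) auto
    also have "\<dots> = ennreal e" using c e by (subst ennreal_mult[symmetric]) auto
    finally show ?thesis using True by simp
  next
    case False
    have lt: "ennreal c \<noteq> 0" using c by simp
    from fin have "ennreal c = 0 \<or> (INF x\<in>D. g x) = 0 \<or> (ennreal c < top \<and> (INF x\<in>D. g x) < top)"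
      unfolding ennreal_mult_less_top .
    then have "(INF x\<in>D. g x) < top" using lt False by blast
    then have ft: "(INF x\<in>D. g x) \<noteq> top" by (rule less_imp_neq)
    obtain x where x: "x \<in> D" "g x < (INF x\<in>D. g x) + ennreal (e/c)"
      using INF_approx_ennreal[where e="e/c" and A=D and f=g, OF _ refl] e c ft by auto
    have "X \<le> ennreal c * g x" using X x by simp
    also have "\<dots> \<le> ennreal c * ((INF x\<in>D. g x) + ennreal (e/c))"
      using x by (intro mult_left_mono) auto
    also have "\<dots> = ennreal c * (INF x\<in>D. g x) + ennreal c * ennreal (e/c)"
      by (simp add: distrib_left)
    also have "ennreal c * ennreal (e/c) = ennreal e"
      using c e by (subst ennreal_mult[symmetric]) auto
    finally show ?thesis .
  qed
qed

lemma packing_approx_mono: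
  assumes "S \<subseteq> T"
  shows "packing_approx s \<delta> S \<le> packing_approx s \<delta> T"
  unfolding packing_approx_def
  by (rule SUP_subset_mono) (use assms in auto)

lemma packing_premeasure_mono:
  assumes "S \<subseteq> T"
  shows "packing_premeasure s S \<le> packing_premeasure s T"
  unfolding packing_premeasure_def
  by (intro INF_mono) (use packing_approx_mono[OF assms] in blast)

lemma packing_premeasure_image:
  fixes F :: "'a::metric_space \<Rightarrow> 'b::real_normed_vector"
  assumes lip: "K-lipschitz_on E F" and K: "K > 0" and s: "0 \<le> s"
  shows "packing_premeasure s (F ` E) \<le> ennreal (K powr s) * packing_premeasure s E"
  unfolding packing_premeasure_def
proof (rule ennreal_le_mult_INF)
  show "K powr s > 0" using K by simp
  fix \<delta> :: real assume d: "\<delta> \<in> {0<..}"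
  have "(INF \<delta>\<in>{0<..}. packing_approx s \<delta> (F ` E)) \<le> packing_approx s (K * \<delta>) (F ` E)"
    using d K by (intro INF_lower) auto
  also have "\<dots> \<le> ennreal (K powr s) * packing_approx s (K * \<delta> / K) E"
    by (rule packing_approx_image[OF lip K s])
  also have "K * \<delta> / K = \<delta>" using K by simp
  finally show "(INF \<delta>\<in>{0<..}. packing_approx s \<delta> (F ` E)) \<le> ennreal (K powr s) * packing_approx s \<delta> E" .
qed

lemma packing_zero_image:
  fixes F :: "'a::metric_space \<Rightarrow> 'b::real_normed_vector"
  assumes lip: "K-lipschitz_on E F" and K: "K > 0" and s: "0 \<le> s"
    and H: "packing_measure s E = 0"
  shows "packing_measure s (F ` E) = 0"
proof -
  have epsP: "packing_measure s (F ` E) \<le> 0 + ennreal e" if e: "e > 0" for e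
  proof -
    have Kp: "K powr s > 0" using K by simp
    have "packing_measure s E < ennreal (e / K powr s)" using H e Kp by simp
    then obtain U where U: "E \<subseteq> (\<Union>i. U i)"
      and sU: "(\<Sum>i. packing_premeasure s (U i)) < ennreal (e / K powr s)"
      unfolding packing_measure_def by (auto simp: INF_less_iff)
    define V where "V i = F ` (U i \<inter> E)" for i
    have cov: "F ` E \<subseteq> (\<Union>i. V i)" using U unfolding V_def by blast
    have Vd: "packing_premeasure s (V i) \<le> ennreal (K powr s) * packing_premeasure s (U i)" for i
    proof -
      have l: "K-lipschitz_on (U i \<inter> E) F" using lipschitz_on_subset[OF lip] by blast
      have "packing_premeasure s (V i) \<le> ennreal (K powr s) * packing_premeasure s (U i \<inter> E)"
        unfolding V_def by (rule packing_premeasure_image[OF l K s])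
      also have "\<dots> \<le> ennreal (K powr s) * packing_premeasure s (U i)"
        by (intro mult_left_mono packing_premeasure_mono) auto
      finally show ?thesis .
    qed
    have "packing_measure s (F ` E) \<le> (\<Sum>i. packing_premeasure s (V i))"
      unfolding packing_measure_def using cov by (intro INF_lower) auto
    also have "\<dots> \<le> (\<Sum>i. ennreal (K powr s) * packing_premeasure s (U i))"
      using Vd by (intro suminf_le) auto
    also have "\<dots> = ennreal (K powr s) * (\<Sum>i. packing_premeasure s (U i))"
      by simp
    also have "\<dots> \<le> ennreal (K powr s) * ennreal (e / K powr s)"
      using sU by (intro mult_left_mono) auto
    also have "\<dots> = ennreal e"
      using Kp e by (subst ennreal_mult[symmetric]) auto
    finally show ?thesis by simp
  qed
  have "packing_measure s (F ` E) \<le> 0" by (rule ennreal_le_epsilon) (rule epsP)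
  then show ?thesis by simp
qed

lemma pdim_image_le:
  fixes F :: "'a::metric_space \<Rightarrow> 'b::real_normed_vector"
  assumes lip: "K-lipschitz_on E F"
  shows "packing_dim (F ` E) \<le> packing_dim E"
proof -
  obtain K' where l: "K'-lipschitz_on E F" "K' > 0" using lip_pos[OF lip] by blast
  show ?thesis unfolding packing_dim_def
    by (rule Inf_superset_mono) (auto intro: packing_zero_image[OF l])
qed



lemma image_piece:
  fixes F :: "'a::metric_space \<Rightarrow> 'b::metric_space"
  assumes lip: "K-lipschitz_on E F" and K: "K > 0"
    and U: "bounded U" "diameter U \<le> \<delta>/K"
  shows "bounded (F ` (U \<inter> E)) \<and> diameter (F ` (U \<inter> E)) \<le> \<delta>"
proof -
  have l: "K-lipschitz_on (U \<inter> E) F" using lipschitz_on_subset[OF lip] by blast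
  have b: "bounded (U \<inter> E)" using U by (meson bounded_subset inf_le1)
  have "diameter (U \<inter> E) \<le> diameter U" using U by (intro diameter_subset) auto
  then have "K * diameter (U \<inter> E) \<le> K * (\<delta>/K)" using U K by (intro mult_left_mono) auto
  then show ?thesis using lip_image_diam[OF l b] K by simp
qed

lemma covering_number_image:
  fixes F :: "'a::metric_space \<Rightarrow> 'b::metric_space"
  assumes lip: "K-lipschitz_on E F" and K: "K > 0"
  shows "covering_number \<delta> (F ` E) \<le> covering_number (\<delta>/K) E"
  unfolding covering_number_def
proof (rule Inf_mono)
  fix b assume "b \<in> {enat n |n. \<exists>U :: nat \<Rightarrow> 'a set. E \<subseteq> (\<Union>i<n. U i) \<and>
      (\<forall>i<n. bounded (U i) \<and> diameter (U i) \<le> \<delta>/K)}"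
  then obtain n and U :: "nat \<Rightarrow> 'a set" where b: "b = enat n" and U: "E \<subseteq> (\<Union>i<n. U i)"
    "\<forall>i<n. bounded (U i) \<and> diameter (U i) \<le> \<delta>/K" by auto
  define V where "V i = F ` (U i \<inter> E)" for i
  have cov: "F ` E \<subseteq> (\<Union>i<n. V i)" using U(1) unfolding V_def by blast
  have "\<forall>i<n. bounded (V i) \<and> diameter (V i) \<le> \<delta>"
    using U(2) image_piece[OF lip K] unfolding V_def by blast
  then have "enat n \<in> {enat n |n. \<exists>U :: nat \<Rightarrow> 'b set. F ` E \<subseteq> (\<Union>i<n. U i) \<and>
      (\<forall>i<n. bounded (U i) \<and> diameter (U i) \<le> \<delta>)}" using cov by blast
  then show "\<exists>a\<in>{enat n |n. \<exists>U :: nat \<Rightarrow> 'b set. F ` E \<subseteq> (\<Union>i<n. U i) \<and>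
      (\<forall>i<n. bounded (U i) \<and> diameter (U i) \<le> \<delta>)}. a \<le> b" using b by blast
qed

lemma ln_nat_mono: "m \<le> (n::nat) \<Longrightarrow> ln (real m) \<le> ln (real n)"
proof (cases "m = 0")
  case True
  then show ?thesis by (cases "n = 0") auto
qed simp

lemma ubox_image_le:
  fixes F :: "'a::metric_space \<Rightarrow> 'b::metric_space"
  assumes lip: "K0-lipschitz_on E F"
  shows "upper_box_dim (F ` E) \<le> upper_box_dim E"
proof -
  obtain K where l: "K-lipschitz_on E F" "K > 0" "K \<ge> 1" using lip_pos[OF lip] by blast
  define u where "u = (\<lambda>\<delta>. if covering_number \<delta> (F ` E) = \<infinity> then \<infinity>
           else ereal (ln (real (the_enat (covering_number \<delta> (F ` E)))) / - ln \<delta>))"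
  define v where "v = (\<lambda>\<delta>. if covering_number \<delta> E = \<infinity> then \<infinity>
           else ereal (ln (real (the_enat (covering_number \<delta> E))) / - ln \<delta>))"
  have "Limsup (at_right 0) u \<le> Limsup (at_right 0) v"
  proof (subst Limsup_le_iff, intro allI impI)
    fix y assume y: "Limsup (at_right 0) v < y"
    obtain z where z: "Limsup (at_right 0) v < z" "z < y" using dense[OF y] by blast
    obtain w where w: "z < w" "w < y" using dense[OF z(2)] by blast
    obtain r where r: "z = ereal r" using z by (cases z) auto
    obtain r' where r': "w = ereal r'" using w by (cases w) auto
    have rr: "r < r'" using w r r' by simp
    have "eventually (\<lambda>x. v x < z) (at_right 0)" using Limsup_lessD[OF z(1)] .
    then obtain b where b: "b > 0" "\<And>x. 0 < x \<Longrightarrow> x < b \<Longrightarrow> v x < ereal r"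
      unfolding eventually_at_right_field r by auto
    define T where "T = \<bar>r\<bar> * ln K / (r' - r) + 1"
    have lnK: "ln K \<ge> 0" using l by simp
    have T: "T > 0" unfolding T_def using rr lnK by (simp add: add_nonneg_pos)
    have "eventually (\<lambda>x. u x < w) (at_right 0)"
      unfolding eventually_at_right_field
    proof (intro exI[of _ "min (b*K) (exp (-T))"] conjI allI impI)
      show "0 < min (b*K) (exp (-T))" using b l T by simp
      fix x :: real assume x: "0 < x" "x < min (b*K) (exp (-T))"
      have xb: "x/K < b" using x l by (simp add: divide_less_eq mult.commute)
      have vx: "v (x/K) < ereal r" using b(2)[of "x/K"] x xb l by simp
      define A where "A = - ln x"
      have "ln x < ln (exp (-T))" using x by (subst ln_less_cancel_iff) auto
      then have A: "A > T" unfolding A_def by simp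
      have B: "- ln (x/K) = A + ln K" using x l by (simp add: ln_div A_def)
      obtain n2 where n2: "covering_number (x/K) E = enat n2"
        using vx unfolding v_def by (cases "covering_number (x/K) E") auto
      have vr: "ln (real n2) / (A + ln K) < r" using vx n2 B unfolding v_def by simp
      have "covering_number x (F ` E) \<le> enat n2"
        using covering_number_image[OF l(1) l(2), of x] n2 by simp
      then obtain n1 where n1: "covering_number x (F ` E) = enat n1" "n1 \<le> n2"
        by (cases "covering_number x (F ` E)") auto
      have u_eq: "u x = ereal (ln (real n1) / A)" unfolding u_def A_def using n1 by simp
      have ln12: "ln (real n1) \<le> ln (real n2)" using ln_nat_mono[OF n1(2)] .
      have ApK: "A + ln K > 0" using A T lnK by simp
      have "ln (real n2) < r * (A + ln K)" using vr ApK by (simp add: divide_less_eq mult.commute)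
      then have c1: "ln (real n1) < r * A + r * ln K" using ln12 by (simp add: distrib_left)
      have c2: "r * ln K \<le> \<bar>r\<bar> * ln K" using lnK by (intro mult_right_mono) auto
      have "\<bar>r\<bar> * ln K = (T - 1) * (r' - r)" using rr unfolding T_def by simp
      also have "\<dots> < T * (r' - r)" using rr by (simp add: algebra_simps)
      also have "\<dots> < A * (r' - r)" using rr A by simp
      finally have c3: "\<bar>r\<bar> * ln K < A * (r' - r)" .
      have "ln (real n1) < r' * A" using c1 c2 c3 by (simp add: algebra_simps)
      then have "ln (real n1) / A < r'" using A T by (simp add: divide_less_eq)
      then show "u x < w" using u_eq r' by simp
    qed
    then show "eventually (\<lambda>x. y > u x) (at_right 0)"
      using w(2) by (auto elim: eventually_mono)
  qed
  then show ?thesis unfolding upper_box_dim_def u_def v_def .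
qed



lemma dims_eq:
  fixes P :: "'a::real_normed_vector \<Rightarrow> 'b::real_normed_vector" and Q :: "'b \<Rightarrow> 'a"
  assumes "L-lipschitz_on E P" "P ` E = E'" "M-lipschitz_on E' Q" "Q ` E' = E"
  shows "hausdorff_dim E' = hausdorff_dim E \<and> upper_box_dim E' = upper_box_dim E
    \<and> packing_dim E' = packing_dim E"
proof -
  have "hausdorff_dim E' \<le> hausdorff_dim E" using hdim_image_le[OF assms(1)] assms(2) by simp
  moreover have "hausdorff_dim E \<le> hausdorff_dim E'" using hdim_image_le[OF assms(3)] assms(4) by simp
  moreover have "upper_box_dim E' \<le> upper_box_dim E" using ubox_image_le[OF assms(1)] assms(2) by simp
  moreover have "upper_box_dim E \<le> upper_box_dim E'" using ubox_image_le[OF assms(3)] assms(4) by simp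
  moreover have "packing_dim E' \<le> packing_dim E" using pdim_image_le[OF assms(1)] assms(2) by simp
  moreover have "packing_dim E \<le> packing_dim E'" using pdim_image_le[OF assms(3)] assms(4) by simp
  ultimately show ?thesis by (meson antisym)
qed

lemma dist_pair_le: "dist (a, b) (c, d) \<le> dist a c + dist b d"
proof -
  have "dist (a, b) (c, d) = sqrt ((dist a c)\<^sup>2 + (dist b d)\<^sup>2)" by (rule dist_Pair_Pair)
  also have "\<dots> \<le> \<bar>dist a c\<bar> + \<bar>dist b d\<bar>" by (rule sqrt_sum_squares_le_sum_abs)
  finally show ?thesis by simp
qed

lemma dist_pair_fst: "dist a c \<le> dist (a, b) (c, d)"
  using dist_fst_le[of "(a,b)" "(c,d)"] by simp

lemma dist_pair_snd: "dist b d \<le> dist (a, b) (c, d)"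
  using dist_snd_le[of "(a,b)" "(c,d)"] by simp

lemma dist_cplx_le:
  "dist (complex_of_real y + \<i> * complex_of_real z) (complex_of_real y' + \<i> * complex_of_real z')
     \<le> dist y y' + dist z z'"
proof -
  have "complex_of_real y + \<i> * complex_of_real z - (complex_of_real y' + \<i> * complex_of_real z')
     = complex_of_real (y - y') + \<i> * complex_of_real (z - z')" (is "?l = ?r") by (simp add: algebra_simps)
  then have "dist (complex_of_real y + \<i> * complex_of_real z) (complex_of_real y' + \<i> * complex_of_real z')
     = norm (complex_of_real (y - y') + \<i> * complex_of_real (z - z'))" by (simp only: dist_norm)
  also have "\<dots> \<le> norm (complex_of_real (y - y')) + norm (\<i> * complex_of_real (z - z'))"
    by (rule norm_triangle_ineq)
  also have "\<dots> = dist y y' + dist z z'"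
    by (simp only: norm_mult norm_ii norm_of_real dist_real_def mult_1)
  finally show ?thesis .
qed

lemma dist_ReIm_le:
  "dist (Re w, Im w) (Re w', Im w') \<le> 2 * dist w w'"
proof -
  have "dist (Re w, Im w) (Re w', Im w') \<le> dist (Re w) (Re w') + dist (Im w) (Im w')"
    by (rule dist_pair_le)
  moreover have "dist (Re w) (Re w') \<le> dist w w'"
    using abs_Re_le_cmod[of "w - w'"] by (simp add: dist_norm dist_real_def)
  moreover have "dist (Im w) (Im w') \<le> dist w w'"
    using abs_Im_le_cmod[of "w - w'"] by (simp add: dist_norm dist_real_def)
  ultimately show ?thesis by simp
qed

lemma dist_add_le: "dist ((y::real) + u) (y' + u') \<le> dist y y' + dist u u'"
  unfolding dist_real_def by arith

lemma dist_sub_le: "dist ((y::real) - u) (y' - u') \<le> dist y y' + dist u u'"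
  unfolding dist_real_def by arith

theorem mainTheorem4:
  fixes f :: "real \<Rightarrow> complex" and a b :: real
  assumes "continuous_on {a..b} f"
    and "\<exists>L. L-lipschitz_on {a..b} (\<lambda>x. Im (f x))"
  shows
   "hausdorff_dim (graph_on {a..b} (\<lambda>x. complex_of_real (Re (f x)) + \<i> * complex_of_real (Im (f x))))
      = hausdorff_dim (graph_on {a..b} (\<lambda>x. Re (f x) + Im (f x))) \<and>
    hausdorff_dim (graph_on {a..b} (\<lambda>x. Re (f x) + Im (f x)))
      = hausdorff_dim (graph_on {a..b} (\<lambda>x. (Re (f x), Im (f x)))) \<and>
    hausdorff_dim (graph_on {a..b} (\<lambda>x. (Re (f x), Im (f x))))
      = hausdorff_dim (graph_on {a..b} (\<lambda>x. Re (f x))) \<and>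
    upper_box_dim (graph_on {a..b} (\<lambda>x. complex_of_real (Re (f x)) + \<i> * complex_of_real (Im (f x))))
      = upper_box_dim (graph_on {a..b} (\<lambda>x. Re (f x) + Im (f x))) \<and>
    upper_box_dim (graph_on {a..b} (\<lambda>x. Re (f x) + Im (f x)))
      = upper_box_dim (graph_on {a..b} (\<lambda>x. (Re (f x), Im (f x)))) \<and>
    upper_box_dim (graph_on {a..b} (\<lambda>x. (Re (f x), Im (f x))))
      = upper_box_dim (graph_on {a..b} (\<lambda>x. Re (f x))) \<and>
    packing_dim (graph_on {a..b} (\<lambda>x. complex_of_real (Re (f x)) + \<i> * complex_of_real (Im (f x))))
      = packing_dim (graph_on {a..b} (\<lambda>x. Re (f x) + Im (f x))) \<and>
    packing_dim (graph_on {a..b} (\<lambda>x. Re (f x) + Im (f x)))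
      = packing_dim (graph_on {a..b} (\<lambda>x. (Re (f x), Im (f x)))) \<and>
    packing_dim (graph_on {a..b} (\<lambda>x. (Re (f x), Im (f x))))
      = packing_dim (graph_on {a..b} (\<lambda>x. Re (f x)))"
proof -
  obtain K where K: "K-lipschitz_on {a..b} (\<lambda>x. Im (f x))" using assms(2) by blast
  have K0: "0 \<le> K" using lipschitz_on_nonneg[OF K] .
  define G1 where "G1 = graph_on {a..b} (\<lambda>x. complex_of_real (Re (f x)) + \<i> * complex_of_real (Im (f x)))"
  define G2 where "G2 = graph_on {a..b} (\<lambda>x. Re (f x) + Im (f x))"
  define G3 where "G3 = graph_on {a..b} (\<lambda>x. (Re (f x), Im (f x)))"
  define G4 where "G4 = graph_on {a..b} (\<lambda>x. Re (f x))"
  define P3 where "P3 = (\<lambda>(x::real, y::real). (x, (y, Im (f x))))"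
  define Q3 where "Q3 = (\<lambda>(x::real, (y::real, z::real)). (x, y))"
  define P2 where "P2 = (\<lambda>(x::real, y::real). (x, y + Im (f x)))"
  define Q2 where "Q2 = (\<lambda>(x::real, y::real). (x, y - Im (f x)))"
  define P1 where "P1 = (\<lambda>(x::real, (y::real, z::real)). (x, complex_of_real y + \<i> * complex_of_real z))"
  define Q1 where "Q1 = (\<lambda>(x::real, w::complex). (x, (Re w, Im w)))"
  have LP3: "(2 + K)-lipschitz_on G4 P3"
  proof (rule lipschitz_onI)
    fix p q assume "p \<in> G4" "q \<in> G4"
    then obtain x x' where pq: "p = (x, Re (f x))" "q = (x', Re (f x'))" "x \<in> {a..b}" "x' \<in> {a..b}"
      by (auto simp: G4_def graph_on_def)
    have "dist (P3 p) (P3 q) \<le> dist x x' + dist (Re (f x), Im (f x)) (Re (f x'), Im (f x'))"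
      using pq by (simp add: P3_def dist_pair_le)
    also have "\<dots> \<le> dist x x' + (dist (Re (f x)) (Re (f x')) + dist (Im (f x)) (Im (f x')))"
      using dist_pair_le by (meson add_left_mono)
    finally have d: "dist (P3 p) (P3 q) \<le> dist x x' + (dist (Re (f x)) (Re (f x')) + dist (Im (f x)) (Im (f x')))" .
    have h: "dist (Im (f x)) (Im (f x')) \<le> K * dist x x'" using lipschitz_onD[OF K pq(3,4)] .
    have d1: "dist x x' \<le> dist p q" using pq dist_pair_fst by simp
    have d2: "dist (Re (f x)) (Re (f x')) \<le> dist p q" using pq dist_pair_snd by simp
    have "K * dist x x' \<le> K * dist p q" using d1 K0 by (rule mult_left_mono)
    moreover have "(2 + K) * dist p q = dist p q + dist p q + K * dist p q" by (simp add: algebra_simps)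
    ultimately show "dist (P3 p) (P3 q) \<le> (2 + K) * dist p q" using d h d1 d2 by linarith
  qed (use K0 in simp)
  have LQ3: "2-lipschitz_on G3 Q3"
  proof (rule lipschitz_onI)
    fix p q assume "p \<in> G3" "q \<in> G3"
    then obtain x x' where pq: "p = (x, (Re (f x), Im (f x)))" "q = (x', (Re (f x'), Im (f x')))"
      by (auto simp: G3_def graph_on_def)
    have "dist (Q3 p) (Q3 q) \<le> dist x x' + dist (Re (f x)) (Re (f x'))"
      using pq by (simp add: Q3_def dist_pair_le)
    moreover have "dist x x' \<le> dist p q" using pq dist_pair_fst by simp
    moreover have "dist (Re (f x)) (Re (f x')) \<le> dist p q"
    proof -
      have "dist (Re (f x)) (Re (f x')) \<le> dist (Re (f x), Im (f x)) (Re (f x'), Im (f x'))"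
        by (rule dist_pair_fst)
      also have "\<dots> \<le> dist p q" using pq dist_pair_snd by simp
      finally show ?thesis .
    qed
    ultimately show "dist (Q3 p) (Q3 q) \<le> 2 * dist p q" by linarith
  qed simp
  have LP2: "(2 + K)-lipschitz_on G4 P2"
  proof (rule lipschitz_onI)
    fix p q assume "p \<in> G4" "q \<in> G4"
    then obtain x x' where pq: "p = (x, Re (f x))" "q = (x', Re (f x'))" "x \<in> {a..b}" "x' \<in> {a..b}"
      by (auto simp: G4_def graph_on_def)
    have "dist (P2 p) (P2 q) \<le> dist x x' + dist (Re (f x) + Im (f x)) (Re (f x') + Im (f x'))"
      using pq by (simp add: P2_def dist_pair_le)
    also have "\<dots> \<le> dist x x' + (dist (Re (f x)) (Re (f x')) + dist (Im (f x)) (Im (f x')))"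
      using dist_add_le by (meson add_left_mono)
    finally have d: "dist (P2 p) (P2 q) \<le> dist x x' + (dist (Re (f x)) (Re (f x')) + dist (Im (f x)) (Im (f x')))" .
    have h: "dist (Im (f x)) (Im (f x')) \<le> K * dist x x'" using lipschitz_onD[OF K pq(3,4)] .
    have d1: "dist x x' \<le> dist p q" using pq dist_pair_fst by simp
    have d2: "dist (Re (f x)) (Re (f x')) \<le> dist p q" using pq dist_pair_snd by simp
    have "K * dist x x' \<le> K * dist p q" using d1 K0 by (rule mult_left_mono)
    moreover have "(2 + K) * dist p q = dist p q + dist p q + K * dist p q" by (simp add: algebra_simps)
    ultimately show "dist (P2 p) (P2 q) \<le> (2 + K) * dist p q" using d h d1 d2 by linarith
  qed (use K0 in simp)
  have LQ2: "(2 + K + K * K)-lipschitz_on G2 Q2"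
  proof (rule lipschitz_onI)
    fix p q assume "p \<in> G2" "q \<in> G2"
    then obtain x x' where pq: "p = (x, Re (f x) + Im (f x))" "q = (x', Re (f x') + Im (f x'))"
      "x \<in> {a..b}" "x' \<in> {a..b}"
      by (auto simp: G2_def graph_on_def)
    have "dist (Q2 p) (Q2 q) \<le> dist x x' + dist (Re (f x) + Im (f x) - Im (f x)) (Re (f x') + Im (f x') - Im (f x'))"
      using pq by (simp add: Q2_def dist_pair_le del: add_diff_cancel_right')
    also have "\<dots> \<le> dist x x' + (dist (Re (f x) + Im (f x)) (Re (f x') + Im (f x')) + dist (Im (f x)) (Im (f x')))"
      using dist_sub_le by (meson add_left_mono)
    finally have d: "dist (Q2 p) (Q2 q) \<le> dist x x' + (dist (Re (f x) + Im (f x)) (Re (f x') + Im (f x')) + dist (Im (f x)) (Im (f x')))" .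
    have h: "dist (Im (f x)) (Im (f x')) \<le> K * dist x x'" using lipschitz_onD[OF K pq(3,4)] .
    have d1: "dist x x' \<le> dist p q" using pq dist_pair_fst by simp
    have d2: "dist (Re (f x) + Im (f x)) (Re (f x') + Im (f x')) \<le> dist p q" using pq dist_pair_snd by simp
    have "K * dist x x' \<le> K * dist p q" using d1 K0 by (rule mult_left_mono)
    moreover have "0 \<le> K * K * dist p q" using K0 by simp
    moreover have "(2 + K + K * K) * dist p q = dist p q + dist p q + K * dist p q + K * K * dist p q"
      by (simp add: algebra_simps)
    ultimately show "dist (Q2 p) (Q2 q) \<le> (2 + K + K * K) * dist p q" using d h d1 d2 by linarith
  qed (use K0 in simp)
  have LP1: "3-lipschitz_on G3 P1"
  proof (rule lipschitz_onI)
    fix p q assume "p \<in> G3" "q \<in> G3"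
    then obtain x x' y y' z z' where pq: "p = (x, (y, z))" "q = (x', (y', z'))"
      by (auto simp: G3_def graph_on_def)
    have "dist (P1 p) (P1 q) \<le> dist x x' + dist (complex_of_real y + \<i> * complex_of_real z) (complex_of_real y' + \<i> * complex_of_real z')"
      using pq by (simp add: P1_def dist_pair_le)
    also have "\<dots> \<le> dist x x' + (dist y y' + dist z z')"
      using dist_cplx_le by (meson add_left_mono)
    finally have d: "dist (P1 p) (P1 q) \<le> dist x x' + (dist y y' + dist z z')" .
    have d1: "dist x x' \<le> dist p q" using pq dist_pair_fst by simp
    have d0: "dist (y, z) (y', z') \<le> dist p q" using pq dist_pair_snd by simp
    have d2: "dist y y' \<le> dist p q" using dist_pair_fst[of y y' z z'] d0 by linarith
    have d3: "dist z z' \<le> dist p q" using dist_pair_snd[of z z' y y'] d0 by linarith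
    show "dist (P1 p) (P1 q) \<le> 3 * dist p q" using d d1 d2 d3 by linarith
  qed simp
  have LQ1: "3-lipschitz_on G1 Q1"
  proof (rule lipschitz_onI)
    fix p q assume "p \<in> G1" "q \<in> G1"
    then obtain x x' w w' where pq: "p = (x, w)" "q = (x', w')"
      by (auto simp: G1_def graph_on_def)
    have "dist (Q1 p) (Q1 q) \<le> dist x x' + dist (Re w, Im w) (Re w', Im w')"
      using pq by (simp add: Q1_def dist_pair_le)
    also have "\<dots> \<le> dist x x' + 2 * dist w w'"
      using dist_ReIm_le by (meson add_left_mono)
    finally have d: "dist (Q1 p) (Q1 q) \<le> dist x x' + 2 * dist w w'" .
    have d1: "dist x x' \<le> dist p q" using pq dist_pair_fst by simp
    have d2: "dist w w' \<le> dist p q" using pq dist_pair_snd by simp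
    show "dist (Q1 p) (Q1 q) \<le> 3 * dist p q" using d d1 d2 by linarith
  qed simp
  have IP3: "P3 ` G4 = G3" unfolding P3_def G3_def G4_def graph_on_def by (auto simp: image_iff)
  have IQ3: "Q3 ` G3 = G4" unfolding Q3_def G3_def G4_def graph_on_def by (auto simp: image_iff)
  have IP2: "P2 ` G4 = G2" unfolding P2_def G2_def G4_def graph_on_def by (auto simp: image_iff)
  have IQ2: "Q2 ` G2 = G4" unfolding Q2_def G2_def G4_def graph_on_def by (auto simp: image_iff)
  have IP1: "P1 ` G3 = G1" unfolding P1_def G1_def G3_def graph_on_def by (auto simp: image_iff)
  have IQ1: "Q1 ` G1 = G3" unfolding Q1_def G1_def G3_def graph_on_def by (auto simp: image_iff)
  have E3: "hausdorff_dim G3 = hausdorff_dim G4 \<and> upper_box_dim G3 = upper_box_dim G4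
    \<and> packing_dim G3 = packing_dim G4" by (rule dims_eq[OF LP3 IP3 LQ3 IQ3])
  have E2: "hausdorff_dim G2 = hausdorff_dim G4 \<and> upper_box_dim G2 = upper_box_dim G4
    \<and> packing_dim G2 = packing_dim G4" by (rule dims_eq[OF LP2 IP2 LQ2 IQ2])
  have E1: "hausdorff_dim G1 = hausdorff_dim G3 \<and> upper_box_dim G1 = upper_box_dim G3
    \<and> packing_dim G1 = packing_dim G3" by (rule dims_eq[OF LP1 IP1 LQ1 IQ1])
  have "hausdorff_dim G1 = hausdorff_dim G2 \<and> hausdorff_dim G2 = hausdorff_dim G3 \<and>
    hausdorff_dim G3 = hausdorff_dim G4 \<and>
    upper_box_dim G1 = upper_box_dim G2 \<and> upper_box_dim G2 = upper_box_dim G3 \<and>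
    upper_box_dim G3 = upper_box_dim G4 \<and>
    packing_dim G1 = packing_dim G2 \<and> packing_dim G2 = packing_dim G3 \<and>
    packing_dim G3 = packing_dim G4" using E1 E2 E3 by simp
  then show ?thesis unfolding G1_def G2_def G3_def G4_def .
qed


end
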